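(* For $k\ge1$ let $N_{2k,k}$ be the reflexive graph on vertex set $\{1,\dots,2k\}$ in which every pair of distinct vertices is adjacent except the pairs $\{1,2\},\{3,4\},\dots,\{2k-1,2k\}$. The family $\{N_{2k,k}: k=1,2,3,\dots\}$ is an antichain under the standard homomorphic image ordering, and hence also under the strong homomorphic image ordering.
   Context: Graphs here are reflexive (loop at every vertex, symmetric edge relation). A homomorphism maps edges to edges; it is strong if additionally every edge of the target between vertices of the image is the image of an edge. Standard homomorphic image ordering: $A\preceq B$ iff there is a surjective homomorphism $B\to A$; strong: iff there is a surjective strong homomorphism $B\to A$. An antichain is a set of pairwise incomparable elements. *)

theory Defs
  imports Main
begin

type_synonym 'a rgraph = "'a set \<times> ('a \<Rightarrow> 'a \<Rightarrow> bool)"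

definition verts :: "'a rgraph \<Rightarrow> 'a set" where "verts G = fst G"
definition adj :: "'a rgraph \<Rightarrow> 'a \<Rightarrow> 'a \<Rightarrow> bool" where "adj G = snd G"

definition reflexive_graph :: "'a rgraph \<Rightarrow> bool" where
  "reflexive_graph G \<longleftrightarrow>
     (\<forall>x y. adj G x y \<longrightarrow> x \<in> verts G \<and> y \<in> verts G) \<and>
     (\<forall>x y. adj G x y \<longrightarrow> adj G y x) \<and>
     (\<forall>x \<in> verts G. adj G x x)"

definition graph_hom :: "('a \<Rightarrow> 'b) \<Rightarrow> 'a rgraph \<Rightarrow> 'b rgraph \<Rightarrow> bool" where
  "graph_hom f G H \<longleftrightarrow>
     (\<forall>x \<in> verts G. f x \<in> verts H) \<and>
     (\<forall>x \<in> verts G. \<forall>y \<in> verts G. adj G x y \<longrightarrow> adj H (f x) (f y))"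

definition strong_graph_hom :: "('a \<Rightarrow> 'b) \<Rightarrow> 'a rgraph \<Rightarrow> 'b rgraph \<Rightarrow> bool" where
  "strong_graph_hom f G H \<longleftrightarrow> graph_hom f G H \<and>
     (\<forall>u \<in> f ` verts G. \<forall>v \<in> f ` verts G. adj H u v \<longrightarrow>
        (\<exists>x \<in> verts G. \<exists>y \<in> verts G. f x = u \<and> f y = v \<and> adj G x y))"

definition hom_image_le :: "'a rgraph \<Rightarrow> 'b rgraph \<Rightarrow> bool" where
  "hom_image_le A B \<longleftrightarrow> (\<exists>f. graph_hom f B A \<and> f ` verts B = verts A)"

definition strong_hom_image_le :: "'a rgraph \<Rightarrow> 'b rgraph \<Rightarrow> bool" where
  "strong_hom_image_le A B \<longleftrightarrow> (\<exists>f. strong_graph_hom f B A \<and> f ` verts B = verts A)"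

definition N_graph :: "nat \<Rightarrow> nat rgraph" where
  "N_graph k = ({1..2*k},
     (\<lambda>x y. x \<in> {1..2*k} \<and> y \<in> {1..2*k} \<and>
        (x = y \<or> \<not> (\<exists>i \<in> {1..k}. {x, y} = {2*i - 1, 2*i}))))"

end

theory Submission
  imports Defs
begin

lemma N_verts: "verts (N_graph n) = {1..2*n}"
  by (simp add: verts_def N_graph_def)

lemma N_adj: "adj (N_graph n) x y \<longleftrightarrow> x\<in>{1..2*n} \<and> y\<in>{1..2*n} \<and>
   (x=y \<or> \<not>(\<exists>i\<in>{1..n}. {x,y}={2*i-1,2*i}))"
  by (simp add: adj_def N_graph_def)

lemma pair_unique:
  assumes "i\<ge>1" "j\<ge>1" "{a,b}={2*i-1,2*i}" "{a',b}={2*j-1,2*(j::nat)}"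
  shows "a = a'"
proof -
  have "(a=2*i-1 \<and> b=2*i) \<or> (a=2*i \<and> b=2*i-1)" using assms(3) by (auto simp: doubleton_eq_iff)
  moreover have "(a'=2*j-1 \<and> b=2*j) \<or> (a'=2*j \<and> b=2*j-1)" using assms(4) by (auto simp: doubleton_eq_iff)
  ultimately show ?thesis using assms(1,2) by presburger
qed

lemma partner:
  assumes "y\<in>{1..2*k}"
  shows "\<exists>z\<in>{1..2*k}. z\<noteq>y \<and> \<not> adj (N_graph k) y z"
proof -
  define i where "i = (y+1) div 2"
  define z where "z = (if odd y then y+1 else y-1)"
  have i: "i\<in>{1..k}" using assms unfolding i_def by auto
  have zin: "z\<in>{1..2*k}" using assms unfolding z_def by auto presburger
  have "{y,z} = {2*i-1,2*i}" unfolding z_def i_def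
    by (cases "odd y") (auto simp: doubleton_eq_iff elim!: oddE evenE)
  moreover have "z\<noteq>y" unfolding z_def using assms by auto
  ultimately show ?thesis using zin i assms unfolding N_adj by blast
qed

lemma main:
  assumes "hom_image_le (N_graph k) (N_graph l)"
  shows "k = l"
proof -
  obtain f where hom: "graph_hom f (N_graph l) (N_graph k)"
    and surj: "f ` {1..2*l} = {1..2*k}"
    using assms by (auto simp: hom_image_le_def N_verts)
  have hadj: "\<And>x y. x\<in>{1..2*l} \<Longrightarrow> y\<in>{1..2*l} \<Longrightarrow> adj (N_graph l) x y \<Longrightarrow> adj (N_graph k) (f x) (f y)"
    using hom by (auto simp: graph_hom_def N_verts)
  have "inj_on f {1..2*l}"
  proof
    fix a a' assume a: "a\<in>{1..2*l}" and a': "a'\<in>{1..2*l}" and eq: "f a = f a'"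
    have y: "f a \<in> {1..2*k}" using a surj by auto
    obtain z where z: "z\<in>{1..2*k}" "z\<noteq>f a" "\<not> adj (N_graph k) (f a) z"
      using partner[OF y] by blast
    obtain b where b: "b\<in>{1..2*l}" "f b = z" using z(1) surj by (metis imageE)
    have "\<not> adj (N_graph l) a b" using hadj[OF a b(1)] z b by auto
    moreover have "a\<noteq>b" using z b by auto
    ultimately obtain i where i: "i\<in>{1..l}" "{a,b}={2*i-1,2*i}" using a b by (auto simp: N_adj)
    have "\<not> adj (N_graph l) a' b" using hadj[OF a' b(1)] z b eq by auto
    moreover have "a'\<noteq>b" using z b eq by auto
    ultimately obtain j where j: "j\<in>{1..l}" "{a',b}={2*j-1,2*j}" using a' b by (auto simp: N_adj)
    show "a = a'" using pair_unique[OF _ _ i(2) j(2)] i j by auto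
  qed
  then have "card {1..2*l} = card {1..2*k}" using surj by (metis card_image)
  then show ?thesis by simp
qed

theorem proposition3p3:
  shows "(\<forall>k\<ge>1. reflexive_graph (N_graph k)) \<and>
    (\<forall>k l. 1 \<le> k \<longrightarrow> 1 \<le> l \<longrightarrow> k \<noteq> l \<longrightarrow>
       \<not> hom_image_le (N_graph k) (N_graph l)) \<and>
    (\<forall>k l. 1 \<le> k \<longrightarrow> 1 \<le> l \<longrightarrow> k \<noteq> l \<longrightarrow>
       \<not> strong_hom_image_le (N_graph k) (N_graph l))"
proof (intro conjI allI impI)
  fix k :: nat
  show "reflexive_graph (N_graph k)"
    unfolding reflexive_graph_def N_verts N_adj by (auto simp: insert_commute)
next
  fix k l :: nat assume "k \<noteq> l"
  then show "\<not> hom_image_le (N_graph k) (N_graph l)" using main by blast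
next
  fix k l :: nat assume "k \<noteq> l"
  then show "\<not> strong_hom_image_le (N_graph k) (N_graph l)" using main
    unfolding strong_hom_image_le_def strong_graph_hom_def hom_image_le_def by blast
qed

end
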